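(* In the stratified setting below, define for each stratum $l$ the quantities $U_l^+,V_l^+,\eta_l^+,\nu_l^+$ and let $TE^+=\sum_{l=1}^L(U_l^+-\eta_l^+)$. If $TE^+\ge 1$, set for each $l$: $A_l=\min(U_l^+,\eta_l^+)$, $D_l=\min(\nu_l^+,V_l^+)$, $B_l=\min(U_l^+-A_l,\nu_l^+-D_l)$, $C_l=\min(\eta_l^+-A_l,V_l^+-D_l)$. If $TE^+<1$, set for each $l$: $B_l=\min(U_l^+,\nu_l^+)$, $C_l=\min(\eta_l^+,V_l^+)$. Then the maximum $\chi^+$ of $\chi(\mathbf a)$ over all feasible matchings equals $$\chi^+=\frac{\sum_{l=1}^L (B_l-C_l)-1}{\sqrt{\sum_{l=1}^L(B_l+C_l)+1}},$$ and it is attained by a feasible matching realizing these pair counts in each stratum.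
   Context: Stratified setting: there are $L$ strata. In stratum $l$ there are $N_l^t$ treated and $N_l^c$ control units, each with a binary outcome; $U_l$ is the number of treated units with outcome 1, $V_l=N_l^t-U_l$ the number of treated units with outcome 0, $\eta_l$ the number of control units with outcome 1, $\nu_l=N_l^c-\eta_l$ the number of control units with outcome 0. Let $M_l=\min(N_l^t,N_l^c)$. A feasible matching $\mathbf a$ is a set of disjoint treated–control pairs, each pair lying within a single stratum, each unit in at most one pair, with exactly $M_l$ pairs in stratum $l$ for every $l$. For a matching, $B(\mathbf a)$ is the number of pairs whose treated unit has outcome 1 and control unit has outcome 0, $C(\mathbf a)$ the number of pairs whose treated unit has outcome 0 and control unit has outcome 1, and $\chi(\mathbf a)=\frac{B(\mathbf a)-C(\mathbf a)-1}{\sqrt{B(\mathbf a)+C(\mathbf a)+1}}$. Truncated counts: $G_l^-=\max(N_l^t-N_l^c,0)$, $G_l^+=\max(N_l^c-N_l^t,0)$, $U_l^+=U_l-\max(U_l-N_l^c,0)$, $V_l^+=M_l-U_l^+$, $\eta_l^+=\max(\eta_l-G_l^+,0)$, $\nu_l^+=M_l-\eta_l^+$. *)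

theory Defs
  imports Complex_Main
begin

(* Setting: strata l < L (0-indexed). Stratum l has treated units i < Nt l with binary
   outcome yt l i, and control units j < Nc l with binary outcome yc l j.
   A matching is a set of triples (l,i,j): treated unit i of stratum l paired with
   control unit j of stratum l. *)

definition M :: "(nat \<Rightarrow> nat) \<Rightarrow> (nat \<Rightarrow> nat) \<Rightarrow> nat \<Rightarrow> nat" where
  "M Nt Nc l = min (Nt l) (Nc l)"

definition feasible_matching ::
  "nat \<Rightarrow> (nat \<Rightarrow> nat) \<Rightarrow> (nat \<Rightarrow> nat) \<Rightarrow> (nat \<times> nat \<times> nat) set \<Rightarrow> bool" where
  "feasible_matching L Nt Nc a \<longleftrightarrow>
     a \<subseteq> {(l,i,j). l < L \<and> i < Nt l \<and> j < Nc l} \<and>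
     (\<forall>l i j j'. (l,i,j) \<in> a \<longrightarrow> (l,i,j') \<in> a \<longrightarrow> j = j') \<and>
     (\<forall>l i i' j. (l,i,j) \<in> a \<longrightarrow> (l,i',j) \<in> a \<longrightarrow> i = i') \<and>
     (\<forall>l<L. card {(i,j). (l,i,j) \<in> a} = M Nt Nc l)"

definition Bcount :: "(nat \<Rightarrow> nat \<Rightarrow> bool) \<Rightarrow> (nat \<Rightarrow> nat \<Rightarrow> bool) \<Rightarrow> (nat \<times> nat \<times> nat) set \<Rightarrow> nat" where
  "Bcount yt yc a = card {(l,i,j) \<in> a. yt l i \<and> \<not> yc l j}"

definition Ccount :: "(nat \<Rightarrow> nat \<Rightarrow> bool) \<Rightarrow> (nat \<Rightarrow> nat \<Rightarrow> bool) \<Rightarrow> (nat \<times> nat \<times> nat) set \<Rightarrow> nat" where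
  "Ccount yt yc a = card {(l,i,j) \<in> a. \<not> yt l i \<and> yc l j}"

definition Bcount_l :: "(nat \<Rightarrow> nat \<Rightarrow> bool) \<Rightarrow> (nat \<Rightarrow> nat \<Rightarrow> bool) \<Rightarrow> (nat \<times> nat \<times> nat) set \<Rightarrow> nat \<Rightarrow> nat" where
  "Bcount_l yt yc a l = card {(i,j). (l,i,j) \<in> a \<and> yt l i \<and> \<not> yc l j}"

definition Ccount_l :: "(nat \<Rightarrow> nat \<Rightarrow> bool) \<Rightarrow> (nat \<Rightarrow> nat \<Rightarrow> bool) \<Rightarrow> (nat \<times> nat \<times> nat) set \<Rightarrow> nat \<Rightarrow> nat" where
  "Ccount_l yt yc a l = card {(i,j). (l,i,j) \<in> a \<and> \<not> yt l i \<and> yc l j}"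

definition chi :: "(nat \<Rightarrow> nat \<Rightarrow> bool) \<Rightarrow> (nat \<Rightarrow> nat \<Rightarrow> bool) \<Rightarrow> (nat \<times> nat \<times> nat) set \<Rightarrow> real" where
  "chi yt yc a = (real (Bcount yt yc a) - real (Ccount yt yc a) - 1)
                 / sqrt (real (Bcount yt yc a) + real (Ccount yt yc a) + 1)"

definition U :: "(nat \<Rightarrow> nat) \<Rightarrow> (nat \<Rightarrow> nat \<Rightarrow> bool) \<Rightarrow> nat \<Rightarrow> int" where
  "U Nt yt l = int (card {i. i < Nt l \<and> yt l i})"
definition V :: "(nat \<Rightarrow> nat) \<Rightarrow> (nat \<Rightarrow> nat \<Rightarrow> bool) \<Rightarrow> nat \<Rightarrow> int" where
  "V Nt yt l = int (Nt l) - U Nt yt l"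
definition eta :: "(nat \<Rightarrow> nat) \<Rightarrow> (nat \<Rightarrow> nat \<Rightarrow> bool) \<Rightarrow> nat \<Rightarrow> int" where
  "eta Nc yc l = int (card {j. j < Nc l \<and> yc l j})"
definition nu :: "(nat \<Rightarrow> nat) \<Rightarrow> (nat \<Rightarrow> nat \<Rightarrow> bool) \<Rightarrow> nat \<Rightarrow> int" where
  "nu Nc yc l = int (Nc l) - eta Nc yc l"

definition Gminus :: "(nat \<Rightarrow> nat) \<Rightarrow> (nat \<Rightarrow> nat) \<Rightarrow> nat \<Rightarrow> int" where
  "Gminus Nt Nc l = max (int (Nt l) - int (Nc l)) 0"
definition Gplus :: "(nat \<Rightarrow> nat) \<Rightarrow> (nat \<Rightarrow> nat) \<Rightarrow> nat \<Rightarrow> int" where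
  "Gplus Nt Nc l = max (int (Nc l) - int (Nt l)) 0"
definition Uplus :: "(nat \<Rightarrow> nat) \<Rightarrow> (nat \<Rightarrow> nat) \<Rightarrow> (nat \<Rightarrow> nat \<Rightarrow> bool) \<Rightarrow> nat \<Rightarrow> int" where
  "Uplus Nt Nc yt l = U Nt yt l - max (U Nt yt l - int (Nc l)) 0"
definition Vplus :: "(nat \<Rightarrow> nat) \<Rightarrow> (nat \<Rightarrow> nat) \<Rightarrow> (nat \<Rightarrow> nat \<Rightarrow> bool) \<Rightarrow> nat \<Rightarrow> int" where
  "Vplus Nt Nc yt l = int (M Nt Nc l) - Uplus Nt Nc yt l"
definition etaplus :: "(nat \<Rightarrow> nat) \<Rightarrow> (nat \<Rightarrow> nat) \<Rightarrow> (nat \<Rightarrow> nat \<Rightarrow> bool) \<Rightarrow> nat \<Rightarrow> int" where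
  "etaplus Nt Nc yc l = max (eta Nc yc l - Gplus Nt Nc l) 0"
definition nuplus :: "(nat \<Rightarrow> nat) \<Rightarrow> (nat \<Rightarrow> nat) \<Rightarrow> (nat \<Rightarrow> nat \<Rightarrow> bool) \<Rightarrow> nat \<Rightarrow> int" where
  "nuplus Nt Nc yc l = int (M Nt Nc l) - etaplus Nt Nc yc l"

end

theory Submission
  imports Defs
begin

lemma stratum_arith:
  fixes a b c d Nt Nc u et Up ep Vp np :: int
  assumes "a\<ge>0" "b\<ge>0" "c\<ge>0" "d\<ge>0" "a+b+c+d = min Nt Nc"
    "a+b \<le> u" "b+d \<le> Nc - et" "0\<le>u" "u\<le>Nt" "0\<le>et" "et\<le>Nc"
    "Up = u - max (u - Nc) 0" "ep = max (et - max (Nc - Nt) 0) 0"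
    "Vp = min Nt Nc - Up" "np = min Nt Nc - ep"
  shows "b - c \<le> Up - ep"
    "b + c \<ge> \<bar>Up - ep\<bar> - ((Up - ep) - (b - c))"
    "b + c \<le> min Up np + min ep Vp + ((Up - ep) - (b - c))"
  using assms by (simp_all add: min_def max_def split: if_splits; arith)+

lemma BC_arith:
  fixes Nt Nc u et Up ep Vp np :: int
  assumes "0\<le>u" "u\<le>Nt" "0\<le>et" "et\<le>Nc"
    "Up = u - max (u - Nc) 0" "ep = max (et - max (Nc - Nt) 0) 0"
    "Vp = min Nt Nc - Up" "np = min Nt Nc - ep"
  shows "min (Up - min Up ep) (np - min np Vp) - min (ep - min Up ep) (Vp - min np Vp) = Up - ep"
    "min (Up - min Up ep) (np - min np Vp) + min (ep - min Up ep) (Vp - min np Vp) = \<bar>Up - ep\<bar>"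
    "min (Up - min Up ep) (np - min np Vp) \<ge> 0" "min (ep - min Up ep) (Vp - min np Vp) \<ge> 0"
    "min (Up - min Up ep) (np - min np Vp) \<le> Up" "min (ep - min Up ep) (Vp - min np Vp) \<le> Vp"
    "min Up np - min ep Vp = Up - ep" "min Up np \<ge> 0" "min ep Vp \<ge> 0"
    "min Up np \<le> Up" "min ep Vp \<le> Vp"
    "0 \<le> Up" "Up \<le> u" "0 \<le> Vp" "Vp \<le> Nt - u" "0 \<le> ep" "ep \<le> et" "0 \<le> np" "np \<le> Nc - et"
    "Up + Vp = min Nt Nc" "ep + np = min Nt Nc"
  using assms by (simp_all add: min_def max_def split: if_splits; arith)+

lemma R1:
  fixes T S k x s :: int
  assumes "T \<ge> 1" "S \<ge> T" "k \<ge> 0" "x = T - k" "s \<ge> S - k" "s \<ge> 0"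
  shows "(real_of_int x - 1) / sqrt (real_of_int s + 1) \<le> (real_of_int T - 1) / sqrt (real_of_int S + 1)"
proof (cases "x \<le> 1")
  case True
  have "(real_of_int x - 1) / sqrt (real_of_int s + 1) \<le> 0"
    using True assms by (intro divide_nonpos_nonneg) auto
  also have "0 \<le> (real_of_int T - 1) / sqrt (real_of_int S + 1)" using assms by auto
  finally show ?thesis .
next
  case False
  define n where "n = T - 1"
  have n2: "(n-k)^2 * (S+1) \<le> n^2 * (S-k+1)"
  proof -
    have "k*(S+1) + n^2 \<le> 2*n*(S+1)"
    proof -
      have "k*(S+1) \<le> (n-1)*(S+1)" using False assms n_def by (intro mult_right_mono) auto
      moreover have "n^2 \<le> (n+1)*(S+1)" using assms n_def
        by (simp add: power2_eq_square) (smt (verit) mult_mono)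
      ultimately show ?thesis by (simp add: algebra_simps)
    qed
    hence "k * (k*(S+1) + n^2) \<le> k*(2*n*(S+1))" using assms by (intro mult_left_mono) auto
    thus ?thesis by (simp add: power2_eq_square algebra_simps)
  qed
  have pos: "real_of_int S - real_of_int k + 1 > 0" "real_of_int S + 1 > 0" "real_of_int x - 1 > 0"
    using assms False by auto
  have "(real_of_int x - 1) / sqrt (real_of_int s + 1) \<le> (real_of_int x - 1) / sqrt (real_of_int S - real_of_int k + 1)"
    using pos assms by (intro divide_left_mono) (auto intro: mult_pos_pos)
  also have "\<dots> \<le> (real_of_int T - 1) / sqrt (real_of_int S + 1)"
  proof -
    have r: "(real_of_int n - real_of_int k)^2 * (real_of_int S + 1) \<le> (real_of_int n)^2 * (real_of_int S - real_of_int k + 1)"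
      using n2 by (metis (mono_tags) of_int_le_iff of_int_add of_int_mult of_int_power of_int_diff of_int_1)
    have "(real_of_int x - 1) * sqrt (real_of_int S + 1) \<le> (real_of_int T - 1) * sqrt (real_of_int S - real_of_int k + 1)"
    proof -
      have e1: "real_of_int x - 1 = real_of_int n - real_of_int k" "real_of_int T - 1 = real_of_int n" using assms n_def by auto
      have "((real_of_int n - real_of_int k) * sqrt (real_of_int S + 1))^2 \<le> (real_of_int n * sqrt (real_of_int S - real_of_int k + 1))^2"
        using r pos by (simp add: power_mult_distrib)
      moreover have "0 \<le> real_of_int n * sqrt (real_of_int S - real_of_int k + 1)" using pos assms n_def by simp
      ultimately show ?thesis unfolding e1 by (rule power2_le_imp_le)
    qed
    thus ?thesis using pos by (simp add: divide_simps)
  qed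
  finally show ?thesis .
qed

lemma R2:
  fixes T S k x s :: int
  assumes "T \<le> 0" "S \<ge> -T" "k \<ge> 0" "x = T - k" "s \<le> S + k" "s \<ge> 0"
  shows "(real_of_int x - 1) / sqrt (real_of_int s + 1) \<le> (real_of_int T - 1) / sqrt (real_of_int S + 1)"
proof -
  define m where "m = 1 - T"
  have n2: "m^2 * (S+k+1) \<le> (m+k)^2 * (S+1)"
  proof -
    have "m \<le> 2*(S+1)" using assms m_def by auto
    hence "k*m*m \<le> k*(2*(S+1))*m" using assms m_def by (intro mult_right_mono mult_left_mono) auto
    moreover have "0 \<le> k*k*(S+1)" using assms by auto
    ultimately show ?thesis by (simp add: power2_eq_square algebra_simps)
  qed
  have pos: "real_of_int S + real_of_int k + 1 > 0" "real_of_int S + 1 > 0" "real_of_int m \<ge> 1"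
    using assms m_def by auto
  have r: "(real_of_int m)^2 * (real_of_int S + real_of_int k + 1) \<le> (real_of_int m + real_of_int k)^2 * (real_of_int S + 1)"
    using n2 by (metis (mono_tags) of_int_le_iff of_int_add of_int_mult of_int_power of_int_1)
  have "real_of_int m * sqrt (real_of_int S + real_of_int k + 1) \<le> (real_of_int m + real_of_int k) * sqrt (real_of_int S + 1)"
  proof -
    have "(real_of_int m * sqrt (real_of_int S + real_of_int k + 1))^2 \<le> ((real_of_int m + real_of_int k) * sqrt (real_of_int S + 1))^2"
      using r pos by (simp add: power_mult_distrib)
    moreover have "0 \<le> (real_of_int m + real_of_int k) * sqrt (real_of_int S + 1)" using pos assms by simp
    ultimately show ?thesis by (rule power2_le_imp_le)
  qed
  hence "(real_of_int T - 1) / sqrt (real_of_int S + 1) \<ge> (real_of_int x - 1) / sqrt (real_of_int S + real_of_int k + 1)"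
    using pos assms m_def by (simp add: divide_simps) (simp add: algebra_simps)
  moreover have "(real_of_int x - 1) / sqrt (real_of_int s + 1) \<le> (real_of_int x - 1) / sqrt (real_of_int S + real_of_int k + 1)"
  proof -
    have "sqrt (real_of_int s + 1) \<le> sqrt (real_of_int S + real_of_int k + 1)" using assms by simp
    hence "(1 - real_of_int x) / sqrt (real_of_int S + real_of_int k + 1) \<le> (1 - real_of_int x) / sqrt (real_of_int s + 1)"
      using assms by (intro divide_left_mono) auto
    moreover have "(real_of_int x - 1) / sqrt (real_of_int s + 1) = - ((1 - real_of_int x) / sqrt (real_of_int s + 1))"
       "(real_of_int x - 1) / sqrt (real_of_int S + real_of_int k + 1) = - ((1 - real_of_int x) / sqrt (real_of_int S + real_of_int k + 1))"
      by (simp_all add: minus_divide_left)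
    ultimately show ?thesis by linarith
  qed
  ultimately show ?thesis by linarith
qed


lemma card_strata:
  fixes Nt Nc :: "nat \<Rightarrow> nat" and a :: "(nat\<times>nat\<times>nat) set"
  assumes "a \<subseteq> {(l,i,j). l < L \<and> i < Nt l \<and> j < Nc l}"
  shows "card {(l,i,j)\<in>a. Q l i j} = (\<Sum>l<L. card {(i,j). (l,i,j)\<in>a \<and> Q l i j})"
proof -
  have eq: "{(l,i,j)\<in>a. Q l i j} = (\<Union>l\<in>{..<L}. (\<lambda>(i,j). (l,i,j)) ` {(i,j). (l,i,j)\<in>a \<and> Q l i j})"
    using assms by (auto simp: image_iff)
  have fin: "finite {(i,j). (l,i,j)\<in>a \<and> Q l i j}" for l
  proof (rule finite_subset)
    show "{(i,j). (l,i,j)\<in>a \<and> Q l i j} \<subseteq> {..<Nt l} \<times> {..<Nc l}" using assms by auto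
  qed (intro finite_cartesian_product finite_lessThan)
  have "card (\<Union>l\<in>{..<L}. (\<lambda>(i,j). (l,i,j)) ` {(i,j). (l,i,j)\<in>a \<and> Q l i j})
      = (\<Sum>l<L. card ((\<lambda>(i,j). (l,i,j)) ` {(i,j). (l,i,j)\<in>a \<and> Q l i j}))"
    by (rule card_UN_disjoint) (auto simp: fin)
  also have "\<dots> = (\<Sum>l<L. card {(i,j). (l,i,j)\<in>a \<and> Q l i j})"
    by (intro sum.cong refl card_image) (auto simp: inj_on_def)
  finally show ?thesis using eq by simp
qed

lemma stratum_counts:
  fixes P :: "(nat\<times>nat) set" and f g :: "nat \<Rightarrow> bool"
  assumes sub: "P \<subseteq> {(i,j). i < n \<and> j < m}"
    and inj1: "\<forall>i j j'. (i,j)\<in>P \<longrightarrow> (i,j')\<in>P \<longrightarrow> j=j'"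
    and inj2: "\<forall>i i' j. (i,j)\<in>P \<longrightarrow> (i',j)\<in>P \<longrightarrow> i=i'"
  shows "card {(i,j). (i,j)\<in>P \<and> f i \<and> g j} + card {(i,j). (i,j)\<in>P \<and> f i \<and> \<not>g j}
       + card {(i,j). (i,j)\<in>P \<and> \<not>f i \<and> g j} + card {(i,j). (i,j)\<in>P \<and> \<not>f i \<and> \<not> g j} = card P"
  and "card {(i,j). (i,j)\<in>P \<and> f i \<and> g j} + card {(i,j). (i,j)\<in>P \<and> f i \<and> \<not>g j} \<le> card {i. i<n \<and> f i}"
  and "card {(i,j). (i,j)\<in>P \<and> f i \<and> \<not>g j} + card {(i,j). (i,j)\<in>P \<and> \<not>f i \<and> \<not>g j} \<le> card {j. j<m \<and> \<not> g j}"
proof -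
  have finP: "finite P"
    by (rule finite_subset[OF _ finite_cartesian_product[of "{..<n}" "{..<m}"]]) (use sub in auto)
  have fs: "finite {(i,j). (i,j)\<in>P \<and> Q i j}" for Q by (rule finite_subset[OF _ finP]) auto
  have spl: "card {(i,j). (i,j)\<in>P \<and> Q i j \<and> R i j} + card {(i,j). (i,j)\<in>P \<and> Q i j \<and> \<not> R i j}
      = card {(i,j). (i,j)\<in>P \<and> Q i j}" for Q R
  proof -
    have "card {(i,j). (i,j)\<in>P \<and> Q i j \<and> R i j} + card {(i,j). (i,j)\<in>P \<and> Q i j \<and> \<not> R i j}
       = card ({(i,j). (i,j)\<in>P \<and> Q i j \<and> R i j} \<union> {(i,j). (i,j)\<in>P \<and> Q i j \<and> \<not> R i j})"
      by (rule card_Un_disjoint[symmetric]) (auto intro: fs)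
    also have "({(i,j). (i,j)\<in>P \<and> Q i j \<and> R i j} \<union> {(i,j). (i,j)\<in>P \<and> Q i j \<and> \<not> R i j}) = {(i,j). (i,j)\<in>P \<and> Q i j}"
      by auto
    finally show ?thesis .
  qed
  have e1: "card {(i,j). (i,j)\<in>P \<and> f i \<and> g j} + card {(i,j). (i,j)\<in>P \<and> f i \<and> \<not>g j} = card {(i,j). (i,j)\<in>P \<and> f i}"
    using spl[of "\<lambda>i j. f i" "\<lambda>i j. g j"] by simp
  have e2: "card {(i,j). (i,j)\<in>P \<and> \<not>f i \<and> g j} + card {(i,j). (i,j)\<in>P \<and> \<not>f i \<and> \<not>g j} = card {(i,j). (i,j)\<in>P \<and> \<not> f i}"
    using spl[of "\<lambda>i j. \<not> f i" "\<lambda>i j. g j"] by simp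
  have e3: "card {(i,j). (i,j)\<in>P \<and> f i} + card {(i,j). (i,j)\<in>P \<and> \<not> f i} = card P"
    using spl[of "\<lambda>i j. True" "\<lambda>i j. f i"] by simp
  have e4: "card {(i,j). (i,j)\<in>P \<and> f i \<and> \<not>g j} + card {(i,j). (i,j)\<in>P \<and> \<not>f i \<and> \<not>g j} = card {(i,j). (i,j)\<in>P \<and> \<not> g j}"
  proof -
    have "card {(i,j). (i,j)\<in>P \<and> \<not> g j \<and> f i} + card {(i,j). (i,j)\<in>P \<and> \<not> g j \<and> \<not>f i} = card {(i,j). (i,j)\<in>P \<and> \<not> g j}"
      using spl[of "\<lambda>i j. \<not> g j" "\<lambda>i j. f i"] by simp
    moreover have "{(i,j). (i,j)\<in>P \<and> \<not> g j \<and> f i} = {(i,j). (i,j)\<in>P \<and> f i \<and> \<not>g j}"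
      "{(i,j). (i,j)\<in>P \<and> \<not> g j \<and> \<not> f i} = {(i,j). (i,j)\<in>P \<and> \<not> f i \<and> \<not>g j}" by auto
    ultimately show ?thesis by simp
  qed
  show "card {(i,j). (i,j)\<in>P \<and> f i \<and> g j} + card {(i,j). (i,j)\<in>P \<and> f i \<and> \<not>g j}
       + card {(i,j). (i,j)\<in>P \<and> \<not>f i \<and> g j} + card {(i,j). (i,j)\<in>P \<and> \<not>f i \<and> \<not> g j} = card P"
    using e1 e2 e3 by simp
  have "card {(i,j). (i,j)\<in>P \<and> f i} \<le> card {i. i<n \<and> f i}"
  proof (rule card_inj_on_le[where f=fst])
    show "inj_on fst {(i,j). (i,j)\<in>P \<and> f i}" using inj1 by (auto simp: inj_on_def)
    show "fst ` {(i,j). (i,j)\<in>P \<and> f i} \<subseteq> {i. i<n \<and> f i}" using sub by auto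
  qed auto
  thus "card {(i,j). (i,j)\<in>P \<and> f i \<and> g j} + card {(i,j). (i,j)\<in>P \<and> f i \<and> \<not>g j} \<le> card {i. i<n \<and> f i}"
    using e1 by simp
  have "card {(i,j). (i,j)\<in>P \<and> \<not> g j} \<le> card {j. j<m \<and> \<not> g j}"
  proof (rule card_inj_on_le[where f=snd])
    show "inj_on snd {(i,j). (i,j)\<in>P \<and> \<not> g j}" using inj2 by (auto simp: inj_on_def)
    show "snd ` {(i,j). (i,j)\<in>P \<and> \<not> g j} \<subseteq> {j. j<m \<and> \<not> g j}" using sub by auto
  qed auto
  thus "card {(i,j). (i,j)\<in>P \<and> f i \<and> \<not>g j} + card {(i,j). (i,j)\<in>P \<and> \<not>f i \<and> \<not>g j} \<le> card {j. j<m \<and> \<not> g j}"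
    using e4 by simp
qed

lemma block:
  fixes X1 X0 Y1 Y0 :: "nat set" and A B C D :: nat
  assumes fin: "finite X1" "finite X0" "finite Y1" "finite Y0"
   and disj: "X1 \<inter> X0 = {}" "Y1 \<inter> Y0 = {}"
   and cards: "A+B \<le> card X1" "C+D \<le> card X0" "A+C \<le> card Y1" "B+D \<le> card Y0"
  shows "\<exists>P. P \<subseteq> (X1\<union>X0)\<times>(Y1\<union>Y0) \<and> (\<forall>i j j'. (i,j)\<in>P \<longrightarrow> (i,j')\<in>P \<longrightarrow> j=j')
     \<and> (\<forall>i i' j. (i,j)\<in>P \<longrightarrow> (i',j)\<in>P \<longrightarrow> i=i') \<and> card P = A+B+C+D
     \<and> card {(i,j). (i,j)\<in>P \<and> i\<in>X1 \<and> j\<in>Y0} = B \<and> card {(i,j). (i,j)\<in>P \<and> i\<in>X0 \<and> j\<in>Y1} = C"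
proof -
  obtain Xa where Xa: "Xa \<subseteq> X1" "card Xa = A" "finite Xa"
    using obtain_subset_with_card_n[of A X1] cards by auto
  have "B \<le> card (X1 - Xa)" using cards Xa fin by (simp add: card_Diff_subset)
  then obtain Xb where Xb: "Xb \<subseteq> X1 - Xa" "card Xb = B" "finite Xb"
    using obtain_subset_with_card_n[of B "X1 - Xa"] by auto
  obtain Xc where Xc: "Xc \<subseteq> X0" "card Xc = C" "finite Xc"
    using obtain_subset_with_card_n[of C X0] cards by auto
  have "D \<le> card (X0 - Xc)" using cards Xc fin by (simp add: card_Diff_subset)
  then obtain Xd where Xd: "Xd \<subseteq> X0 - Xc" "card Xd = D" "finite Xd"
    using obtain_subset_with_card_n[of D "X0 - Xc"] by auto
  obtain Ya where Ya: "Ya \<subseteq> Y1" "card Ya = A" "finite Ya"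
    using obtain_subset_with_card_n[of A Y1] cards by auto
  have "C \<le> card (Y1 - Ya)" using cards Ya fin by (simp add: card_Diff_subset)
  then obtain Yc where Yc: "Yc \<subseteq> Y1 - Ya" "card Yc = C" "finite Yc"
    using obtain_subset_with_card_n[of C "Y1 - Ya"] by auto
  obtain Yb where Yb: "Yb \<subseteq> Y0" "card Yb = B" "finite Yb"
    using obtain_subset_with_card_n[of B Y0] cards by auto
  have "D \<le> card (Y0 - Yb)" using cards Yb fin by (simp add: card_Diff_subset)
  then obtain Yd where Yd: "Yd \<subseteq> Y0 - Yb" "card Yd = D" "finite Yd"
    using obtain_subset_with_card_n[of D "Y0 - Yb"] by auto
  obtain fa where fa: "bij_betw fa Xa Ya" using finite_same_card_bij Xa Ya by metis
  obtain fb where fb: "bij_betw fb Xb Yb" using finite_same_card_bij Xb Yb by metis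
  obtain fc where fc: "bij_betw fc Xc Yc" using finite_same_card_bij Xc Yc by metis
  obtain fd where fd: "bij_betw fd Xd Yd" using finite_same_card_bij Xd Yd by metis
  define F where "F i = (if i\<in>Xa then fa i else if i\<in>Xb then fb i else if i\<in>Xc then fc i else fd i)" for i
  have Fa: "bij_betw F Xa Ya" using fa by (subst bij_betw_cong[of Xa F fa]) (auto simp: F_def)
  have Fb: "bij_betw F Xb Yb" using fb Xb by (subst bij_betw_cong[of Xb F fb]) (auto simp: F_def)
  have Fc: "bij_betw F Xc Yc" using fc Xc Xa Xb disj by (subst bij_betw_cong[of Xc F fc]) (auto simp: F_def)
  have Fd: "bij_betw F Xd Yd" using fd Xd Xc Xa Xb disj by (subst bij_betw_cong[of Xd F fd]) (auto simp: F_def)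
  have Fall: "bij_betw F (Xa \<union> Xb \<union> Xc \<union> Xd) (Ya \<union> Yb \<union> Yc \<union> Yd)"
    by (intro bij_betw_combine Fa Fb Fc Fd) (use Ya Yb Yc Yd disj in blast)+
  define Dom where "Dom = Xa \<union> Xb \<union> Xc \<union> Xd"
  define P where "P = (\<lambda>i. (i, F i)) ` Dom"
  have injF: "inj_on F Dom" using Fall unfolding Dom_def bij_betw_def by simp
  have imF: "F ` Dom = Ya \<union> Yb \<union> Yc \<union> Yd" using Fall unfolding Dom_def bij_betw_def by simp
  have s1: "P \<subseteq> (X1\<union>X0)\<times>(Y1\<union>Y0)"
  proof
    fix p assume "p \<in> P"
    then obtain i where i: "i \<in> Dom" "p = (i, F i)" unfolding P_def by auto
    have "F i \<in> Ya \<union> Yb \<union> Yc \<union> Yd" using imF i by auto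
    thus "p \<in> (X1\<union>X0)\<times>(Y1\<union>Y0)" using i Xa Xb Xc Xd Ya Yb Yc Yd unfolding Dom_def by auto
  qed
  have s2: "\<forall>i j j'. (i,j)\<in>P \<longrightarrow> (i,j')\<in>P \<longrightarrow> j=j'" unfolding P_def by auto
  have s3: "\<forall>i i' j. (i,j)\<in>P \<longrightarrow> (i',j)\<in>P \<longrightarrow> i=i'" unfolding P_def using injF by (auto simp: inj_on_def)
  have injP: "inj_on (\<lambda>i. (i, F i)) S" for S by (auto simp: inj_on_def)
  have finD: "finite Xa" "finite Xb" "finite Xc" "finite Xd" using Xa Xb Xc Xd by auto
  have s4: "card P = A+B+C+D"
  proof -
    have "card P = card Dom" unfolding P_def by (rule card_image[OF injP])
    also have "\<dots> = card Xa + card Xb + card Xc + card Xd" unfolding Dom_def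
      using finD Xa Xb Xc Xd disj
      by (subst card_Un_disjoint, blast, blast, blast)+ simp
    finally show ?thesis using Xa Xb Xc Xd by simp
  qed
  have s5: "{(i,j). (i,j)\<in>P \<and> i\<in>X1 \<and> j\<in>Y0} = (\<lambda>i. (i, F i)) ` Xb"
  proof -
    have "F i \<notin> Y0" if "i \<in> Xa" for i using Fa that Ya disj by (auto simp: bij_betw_def)
    moreover have "F i \<in> Yb" if "i \<in> Xb" for i using Fb that by (auto simp: bij_betw_def)
    ultimately show ?thesis unfolding P_def Dom_def using Xa Xb Xc Xd Ya Yb disj by auto
  qed
  have s6: "{(i,j). (i,j)\<in>P \<and> i\<in>X0 \<and> j\<in>Y1} = (\<lambda>i. (i, F i)) ` Xc"
  proof -
    have "F i \<notin> Y1" if "i \<in> Xd" for i using Fd that Yd disj by (auto simp: bij_betw_def)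
    moreover have "F i \<in> Y1" if "i \<in> Xc" for i using Fc that Yc by (auto simp: bij_betw_def)
    ultimately show ?thesis unfolding P_def Dom_def using Xa Xb Xc Xd Yc Yd disj by auto
  qed
  have "card {(i,j). (i,j)\<in>P \<and> i\<in>X1 \<and> j\<in>Y0} = B" unfolding s5 using card_image[OF injP] Xb by simp
  moreover have "card {(i,j). (i,j)\<in>P \<and> i\<in>X0 \<and> j\<in>Y1} = C" unfolding s6 using card_image[OF injP] Xc by simp
  ultimately show ?thesis using s1 s2 s3 s4 by blast
qed

lemma card_neg: "card {i. i < n \<and> \<not> p i} = n - card {i. i < (n::nat) \<and> p i}"
proof -
  have "card {i. i < n \<and> \<not> p i} + card {i. i < n \<and> p i} = card ({i. i < n \<and> \<not> p i} \<union> {i. i < n \<and> p i})"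
    by (rule card_Un_disjoint[symmetric]) auto
  also have "{i. i < n \<and> \<not> p i} \<union> {i. i < n \<and> p i} = {..<n}" by auto
  finally show ?thesis by simp
qed

lemma card_le_n: "card {i. i < n \<and> p i} \<le> (n::nat)"
  by (rule order_trans[OF card_mono[of "{..<n}"]]) auto

theorem theorem6:
  fixes L :: nat and Nt Nc :: "nat \<Rightarrow> nat" and yt yc :: "nat \<Rightarrow> nat \<Rightarrow> bool"
    and Bl Cl :: "nat \<Rightarrow> int"
  defines "TE \<equiv> (\<Sum>l<L. Uplus Nt Nc yt l - etaplus Nt Nc yc l)"
  assumes Bl_def: "\<And>l. Bl l = (if TE \<ge> 1 then
              min (Uplus Nt Nc yt l - min (Uplus Nt Nc yt l) (etaplus Nt Nc yc l))
                  (nuplus Nt Nc yc l - min (nuplus Nt Nc yc l) (Vplus Nt Nc yt l))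
            else min (Uplus Nt Nc yt l) (nuplus Nt Nc yc l))"
  and Cl_def: "\<And>l. Cl l = (if TE \<ge> 1 then
              min (etaplus Nt Nc yc l - min (Uplus Nt Nc yt l) (etaplus Nt Nc yc l))
                  (Vplus Nt Nc yt l - min (nuplus Nt Nc yc l) (Vplus Nt Nc yt l))
            else min (etaplus Nt Nc yc l) (Vplus Nt Nc yt l))"
  shows "(\<forall>a. feasible_matching L Nt Nc a \<longrightarrow>
            chi yt yc a \<le> (real_of_int (\<Sum>l<L. Bl l - Cl l) - 1)
                           / sqrt (real_of_int (\<Sum>l<L. Bl l + Cl l) + 1))
       \<and> (\<exists>a. feasible_matching L Nt Nc a
            \<and> (\<forall>l<L. int (Bcount_l yt yc a l) = Bl l \<and> int (Ccount_l yt yc a l) = Cl l)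
            \<and> chi yt yc a = (real_of_int (\<Sum>l<L. Bl l - Cl l) - 1)
                           / sqrt (real_of_int (\<Sum>l<L. Bl l + Cl l) + 1))"
proof -
  have U0: "0 \<le> U Nt yt l" "U Nt yt l \<le> int (Nt l)" for l
    using card_le_n[of "Nt l" "yt l"] by (simp_all add: U_def)
  have E0: "0 \<le> eta Nc yc l" "eta Nc yc l \<le> int (Nc l)" for l
    using card_le_n[of "Nc l" "yc l"] by (simp_all add: eta_def)
  have defs: "Uplus Nt Nc yt l = U Nt yt l - max (U Nt yt l - int (Nc l)) 0"
   "etaplus Nt Nc yc l = max (eta Nc yc l - max (int (Nc l) - int (Nt l)) 0) 0"
   "Vplus Nt Nc yt l = min (int (Nt l)) (int (Nc l)) - Uplus Nt Nc yt l"
   "nuplus Nt Nc yc l = min (int (Nt l)) (int (Nc l)) - etaplus Nt Nc yc l" for l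
    by (simp_all add: Uplus_def etaplus_def Gplus_def Vplus_def nuplus_def M_def)
  note BC = BC_arith[OF U0(1) U0(2) E0(1) E0(2) defs]
  have BClc: "Bl l - Cl l = Uplus Nt Nc yt l - etaplus Nt Nc yc l \<and> 0 \<le> Bl l \<and> 0 \<le> Cl l
    \<and> Bl l \<le> Uplus Nt Nc yt l \<and> Cl l \<le> Vplus Nt Nc yt l
    \<and> (TE \<ge> 1 \<longrightarrow> Bl l + Cl l = \<bar>Uplus Nt Nc yt l - etaplus Nt Nc yc l\<bar>)" for l
  proof (cases "TE \<ge> 1")
    case True
    have b: "Bl l = min (Uplus Nt Nc yt l - min (Uplus Nt Nc yt l) (etaplus Nt Nc yc l))
                  (nuplus Nt Nc yc l - min (nuplus Nt Nc yc l) (Vplus Nt Nc yt l))"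
      unfolding Bl_def[of l] if_P[OF True] ..
    have c: "Cl l = min (etaplus Nt Nc yc l - min (Uplus Nt Nc yt l) (etaplus Nt Nc yc l))
                  (Vplus Nt Nc yt l - min (nuplus Nt Nc yc l) (Vplus Nt Nc yt l))"
      unfolding Cl_def[of l] if_P[OF True] ..
    show ?thesis unfolding b c using BC(1-6)[of l] by linarith
  next
    case False
    have b: "Bl l = min (Uplus Nt Nc yt l) (nuplus Nt Nc yc l)"
      unfolding Bl_def[of l] if_not_P[OF False] ..
    have c: "Cl l = min (etaplus Nt Nc yc l) (Vplus Nt Nc yt l)"
      unfolding Cl_def[of l] if_not_P[OF False] ..
    show ?thesis unfolding b c using BC(7-11)[of l] False by linarith
  qed
  have BCl: "Bl l - Cl l = Uplus Nt Nc yt l - etaplus Nt Nc yc l" "0 \<le> Bl l" "0 \<le> Cl l"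
    "Bl l \<le> Uplus Nt Nc yt l" "Cl l \<le> Vplus Nt Nc yt l" for l
    using BClc[of l] by simp_all
  have BC1: "Bl l + Cl l = \<bar>Uplus Nt Nc yt l - etaplus Nt Nc yc l\<bar>" if "TE \<ge> 1" for l
    using BClc[of l] that by simp
  have BC2: "Bl l = min (Uplus Nt Nc yt l) (nuplus Nt Nc yc l)" "Cl l = min (etaplus Nt Nc yc l) (Vplus Nt Nc yt l)"
    if "\<not> TE \<ge> 1" for l
    unfolding Bl_def[of l] Cl_def[of l] if_not_P[OF that] by simp_all
  have TE_eq: "TE = (\<Sum>l<L. Bl l - Cl l)" unfolding TE_def by (simp add: BCl(1))
  have chi_eq: "chi yt yc a = (real_of_int (\<Sum>l<L. int (Bcount_l yt yc a l) - int (Ccount_l yt yc a l)) - 1)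
       / sqrt (real_of_int (\<Sum>l<L. int (Bcount_l yt yc a l) + int (Ccount_l yt yc a l)) + 1)"
    if "a \<subseteq> {(l,i,j). l < L \<and> i < Nt l \<and> j < Nc l}" for a
  proof -
    have "Bcount yt yc a = (\<Sum>l<L. Bcount_l yt yc a l)"
      unfolding Bcount_def Bcount_l_def using card_strata[OF that, of "\<lambda>l i j. yt l i \<and> \<not> yc l j"] by simp
    moreover have "Ccount yt yc a = (\<Sum>l<L. Ccount_l yt yc a l)"
      unfolding Ccount_def Ccount_l_def using card_strata[OF that, of "\<lambda>l i j. \<not> yt l i \<and> yc l j"] by simp
    ultimately show ?thesis unfolding chi_def by (simp add: sum_subtractf sum.distrib)
  qed
  have part1: "chi yt yc a \<le> (real_of_int (\<Sum>l<L. Bl l - Cl l) - 1) / sqrt (real_of_int (\<Sum>l<L. Bl l + Cl l) + 1)"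
    if fa: "feasible_matching L Nt Nc a" for a
  proof -
    have sub: "a \<subseteq> {(l,i,j). l < L \<and> i < Nt l \<and> j < Nc l}" using fa by (simp add: feasible_matching_def)
    define bb where "bb l = int (Bcount_l yt yc a l)" for l
    define cc where "cc l = int (Ccount_l yt yc a l)" for l
    have loc: "bb l - cc l \<le> Uplus Nt Nc yt l - etaplus Nt Nc yc l
        \<and> bb l + cc l \<ge> \<bar>Uplus Nt Nc yt l - etaplus Nt Nc yc l\<bar> - ((Uplus Nt Nc yt l - etaplus Nt Nc yc l) - (bb l - cc l))
        \<and> bb l + cc l \<le> min (Uplus Nt Nc yt l) (nuplus Nt Nc yc l) + min (etaplus Nt Nc yc l) (Vplus Nt Nc yt l)
              + ((Uplus Nt Nc yt l - etaplus Nt Nc yc l) - (bb l - cc l))" if "l < L" for l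
    proof -
      define P where "P = {(i,j). (l,i,j)\<in>a}"
      have Psub: "P \<subseteq> {(i,j). i < Nt l \<and> j < Nc l}" using sub unfolding P_def by auto
      have inj1: "\<forall>i j j'. (i,j)\<in>P \<longrightarrow> (i,j')\<in>P \<longrightarrow> j=j'" and inj2: "\<forall>i i' j. (i,j)\<in>P \<longrightarrow> (i',j)\<in>P \<longrightarrow> i=i'"
        using fa unfolding P_def feasible_matching_def by blast+
      have cP: "card P = M Nt Nc l" using fa that unfolding P_def feasible_matching_def by blast
      note sc = stratum_counts[OF Psub inj1 inj2, of "yt l" "yc l"]
      have Pm: "(i,j) \<in> P \<longleftrightarrow> (l,i,j) \<in> a" for i j unfolding P_def by simp
      have bbe: "bb l = int (card {(i,j). (i,j)\<in>P \<and> yt l i \<and> \<not> yc l j})"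
        unfolding bb_def Bcount_l_def Pm ..
      have cce: "cc l = int (card {(i,j). (i,j)\<in>P \<and> \<not> yt l i \<and> yc l j})"
        unfolding cc_def Ccount_l_def Pm ..
      have nuc: "card {j. j < Nc l \<and> \<not> yc l j} = Nc l - card {j. j < Nc l \<and> yc l j}" by (rule card_neg)
      have le: "card {j. j < Nc l \<and> yc l j} \<le> Nc l" by (rule card_le_n)
      define c11 where "c11 = card {(i,j). (i,j)\<in>P \<and> yt l i \<and> yc l j}"
      define c10 where "c10 = card {(i,j). (i,j)\<in>P \<and> yt l i \<and> \<not> yc l j}"
      define c01 where "c01 = card {(i,j). (i,j)\<in>P \<and> \<not> yt l i \<and> yc l j}"
      define c00 where "c00 = card {(i,j). (i,j)\<in>P \<and> \<not> yt l i \<and> \<not> yc l j}"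
      have n1: "c11 + c10 + c01 + c00 = min (Nt l) (Nc l)"
        using sc(1) cP unfolding c11_def c10_def c01_def c00_def M_def by simp
      have n2: "c11 + c10 \<le> card {i. i < Nt l \<and> yt l i}"
        using sc(2) unfolding c11_def c10_def .
      have n3: "c10 + c00 + card {j. j < Nc l \<and> yc l j} \<le> Nc l"
        using sc(3) nuc le unfolding c10_def c00_def by linarith
      have h1: "int c11 + bb l + cc l + int c00 = min (int (Nt l)) (int (Nc l))"
        using n1 unfolding bbe cce c10_def[symmetric] c01_def[symmetric] by linarith
      have h2: "int c11 + bb l \<le> U Nt yt l"
        using n2 unfolding bbe c10_def[symmetric] U_def by linarith
      have h3: "bb l + int c00 \<le> int (Nc l) - eta Nc yc l"
        using n3 unfolding bbe c10_def[symmetric] eta_def by linarith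
      note r = stratum_arith[OF _ _ _ _ h1 h2 h3 U0(1)[of l] U0(2)[of l] E0(1)[of l] E0(2)[of l] defs[of l]]
      have bb0: "0 \<le> bb l" and cc0: "0 \<le> cc l" by (simp_all add: bb_def cc_def)
      show ?thesis using r[OF of_nat_0_le_iff bb0 cc0 of_nat_0_le_iff] by blast
    qed
    define dd where "dd l = (Bl l - Cl l) - (bb l - cc l)" for l
    have dd0: "dd l \<ge> 0" if "l < L" for l using loc[OF that] BCl[of l] unfolding dd_def by simp
    define x where "x = (\<Sum>l<L. bb l - cc l)"
    define s where "s = (\<Sum>l<L. bb l + cc l)"
    define T where "T = (\<Sum>l<L. Bl l - Cl l)"
    define S where "S = (\<Sum>l<L. Bl l + Cl l)"
    define k where "k = (\<Sum>l<L. dd l)"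
    have k0: "k \<ge> 0" unfolding k_def using dd0 by (intro sum_nonneg) auto
    have xk: "x = T - k" unfolding x_def T_def k_def dd_def by (simp add: sum_subtractf)
    have s0: "s \<ge> 0" unfolding s_def bb_def cc_def by (intro sum_nonneg) auto
    have ch: "chi yt yc a = (real_of_int x - 1) / sqrt (real_of_int s + 1)"
      unfolding chi_eq[OF sub] x_def s_def bb_def cc_def ..
    show ?thesis
    proof (cases "TE \<ge> 1")
      case True
      have t1: "T \<ge> 1" using True TE_eq T_def by simp
      have t2: "S \<ge> T" unfolding S_def T_def
      proof (intro sum_mono)
        fix l show "Bl l - Cl l \<le> Bl l + Cl l" using BCl(3)[of l] by linarith
      qed
      have t3: "s \<ge> S - k"
      proof -
        have "S - k = (\<Sum>l<L. (Bl l + Cl l) - dd l)" unfolding S_def k_def by (simp add: sum_subtractf)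
        also have "\<dots> \<le> s" unfolding s_def
          using loc BC1[OF True] BCl(1) unfolding dd_def by (intro sum_mono) auto
        finally show ?thesis .
      qed
      have "chi yt yc a \<le> (real_of_int T - 1) / sqrt (real_of_int S + 1)"
        using R1[OF t1 t2 k0 xk t3 s0] ch by simp
      thus ?thesis unfolding T_def S_def .
    next
      case False
      have t1: "T \<le> 0" using False TE_eq T_def by simp
      have t2: "S \<ge> - T" unfolding S_def T_def sum_negf[symmetric]
      proof (intro sum_mono)
        fix l show "- (Bl l - Cl l) \<le> Bl l + Cl l" using BCl(2)[of l] by linarith
      qed
      have t3: "s \<le> S + k"
      proof -
        have "S + k = (\<Sum>l<L. (Bl l + Cl l) + dd l)" unfolding S_def k_def by (simp add: sum.distrib)
        moreover have "s \<le> (\<Sum>l<L. (Bl l + Cl l) + dd l)" unfolding s_def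
          using loc BC2[OF False] BCl(1) unfolding dd_def by (intro sum_mono) auto
        ultimately show ?thesis by simp
      qed
      have "chi yt yc a \<le> (real_of_int T - 1) / sqrt (real_of_int S + 1)"
        using R2[OF t1 t2 k0 xk t3 s0] ch by simp
      thus ?thesis unfolding T_def S_def .
    qed
  qed
  have ex: "\<forall>l\<in>{..<L}. \<exists>P. P \<subseteq> ({i. i<Nt l \<and> yt l i} \<union> {i. i<Nt l \<and> \<not> yt l i}) \<times> ({j. j<Nc l \<and> yc l j} \<union> {j. j<Nc l \<and> \<not> yc l j})
     \<and> (\<forall>i j j'. (i,j)\<in>P \<longrightarrow> (i,j')\<in>P \<longrightarrow> j=j')
     \<and> (\<forall>i i' j. (i,j)\<in>P \<longrightarrow> (i',j)\<in>P \<longrightarrow> i=i') \<and> int (card P) = int (M Nt Nc l)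
     \<and> int (card {(i,j). (i,j)\<in>P \<and> i\<in>{i. i<Nt l \<and> yt l i} \<and> j\<in>{j. j<Nc l \<and> \<not> yc l j}}) = Bl l
     \<and> int (card {(i,j). (i,j)\<in>P \<and> i\<in>{i. i<Nt l \<and> \<not> yt l i} \<and> j\<in>{j. j<Nc l \<and> yc l j}}) = Cl l"
  proof
    fix l assume "l \<in> {..<L}"
    define A where "A = nat (Uplus Nt Nc yt l - Bl l)"
    define B where "B = nat (Bl l)"
    define C where "C = nat (Cl l)"
    define D where "D = nat (Vplus Nt Nc yt l - Cl l)"
    have iA: "int A = Uplus Nt Nc yt l - Bl l" unfolding A_def using BCl(4)[of l] by simp
    have iB: "int B = Bl l" unfolding B_def using BCl(2)[of l] by simp
    have iC: "int C = Cl l" unfolding C_def using BCl(3)[of l] by simp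
    have iD: "int D = Vplus Nt Nc yt l - Cl l" unfolding D_def using BCl(5)[of l] by simp
    have cX1: "int (card {i. i<Nt l \<and> yt l i}) = U Nt yt l" by (simp add: U_def)
    have cX0: "int (card {i. i<Nt l \<and> \<not> yt l i}) = int (Nt l) - U Nt yt l"
      using card_neg[of "Nt l" "yt l"] card_le_n[of "Nt l" "yt l"] by (simp add: U_def of_nat_diff)
    have cY1: "int (card {j. j<Nc l \<and> yc l j}) = eta Nc yc l" by (simp add: eta_def)
    have cY0: "int (card {j. j<Nc l \<and> \<not> yc l j}) = int (Nc l) - eta Nc yc l"
      using card_neg[of "Nc l" "yc l"] card_le_n[of "Nc l" "yc l"] by (simp add: eta_def of_nat_diff)
    have c1: "A + B \<le> card {i. i<Nt l \<and> yt l i}"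
    proof -
      have "int (A + B) \<le> int (card {i. i<Nt l \<and> yt l i})" using iA iB cX1 BC(13)[of l] by simp
      thus ?thesis by linarith
    qed
    have c2: "C + D \<le> card {i. i<Nt l \<and> \<not> yt l i}"
    proof -
      have "int (C + D) \<le> int (card {i. i<Nt l \<and> \<not> yt l i})" using iC iD cX0 BC(15)[of l] by simp
      thus ?thesis by linarith
    qed
    have c3: "A + C \<le> card {j. j<Nc l \<and> yc l j}"
    proof -
      have "int (A + C) \<le> int (card {j. j<Nc l \<and> yc l j})" using iA iC cY1 BC(17)[of l] BCl(1)[of l] by simp
      thus ?thesis by linarith
    qed
    have c4: "B + D \<le> card {j. j<Nc l \<and> \<not> yc l j}"
    proof -
      have "int (B + D) \<le> int (card {j. j<Nc l \<and> \<not> yc l j})"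
        using iB iD cY0 BC(19)[of l] BC(20)[of l] BC(21)[of l] BCl(1)[of l] by simp
      thus ?thesis by linarith
    qed
    obtain P where P: "P \<subseteq> ({i. i<Nt l \<and> yt l i} \<union> {i. i<Nt l \<and> \<not> yt l i}) \<times> ({j. j<Nc l \<and> yc l j} \<union> {j. j<Nc l \<and> \<not> yc l j})"
      "\<forall>i j j'. (i,j)\<in>P \<longrightarrow> (i,j')\<in>P \<longrightarrow> j=j'" "\<forall>i i' j. (i,j)\<in>P \<longrightarrow> (i',j)\<in>P \<longrightarrow> i=i'"
      "card P = A+B+C+D"
      "card {(i,j). (i,j)\<in>P \<and> i\<in>{i. i<Nt l \<and> yt l i} \<and> j\<in>{j. j<Nc l \<and> \<not> yc l j}} = B"
      "card {(i,j). (i,j)\<in>P \<and> i\<in>{i. i<Nt l \<and> \<not> yt l i} \<and> j\<in>{j. j<Nc l \<and> yc l j}} = C"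
      using block[of "{i. i<Nt l \<and> yt l i}" "{i. i<Nt l \<and> \<not> yt l i}" "{j. j<Nc l \<and> yc l j}" "{j. j<Nc l \<and> \<not> yc l j}" A B C D]
        c1 c2 c3 c4 by auto
    have "int (card P) = int (M Nt Nc l)"
      using P(4) iA iB iC iD BC(20)[of l] by (simp add: M_def)
    thus "\<exists>P. P \<subseteq> ({i. i<Nt l \<and> yt l i} \<union> {i. i<Nt l \<and> \<not> yt l i}) \<times> ({j. j<Nc l \<and> yc l j} \<union> {j. j<Nc l \<and> \<not> yc l j})
     \<and> (\<forall>i j j'. (i,j)\<in>P \<longrightarrow> (i,j')\<in>P \<longrightarrow> j=j')
     \<and> (\<forall>i i' j. (i,j)\<in>P \<longrightarrow> (i',j)\<in>P \<longrightarrow> i=i') \<and> int (card P) = int (M Nt Nc l)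
     \<and> int (card {(i,j). (i,j)\<in>P \<and> i\<in>{i. i<Nt l \<and> yt l i} \<and> j\<in>{j. j<Nc l \<and> \<not> yc l j}}) = Bl l
     \<and> int (card {(i,j). (i,j)\<in>P \<and> i\<in>{i. i<Nt l \<and> \<not> yt l i} \<and> j\<in>{j. j<Nc l \<and> yc l j}}) = Cl l"
      using P iB iC by blast
  qed
  then obtain PP where PP: "\<forall>l\<in>{..<L}. PP l \<subseteq> ({i. i<Nt l \<and> yt l i} \<union> {i. i<Nt l \<and> \<not> yt l i}) \<times> ({j. j<Nc l \<and> yc l j} \<union> {j. j<Nc l \<and> \<not> yc l j})
     \<and> (\<forall>i j j'. (i,j)\<in>PP l \<longrightarrow> (i,j')\<in>PP l \<longrightarrow> j=j')
     \<and> (\<forall>i i' j. (i,j)\<in>PP l \<longrightarrow> (i',j)\<in>PP l \<longrightarrow> i=i') \<and> int (card (PP l)) = int (M Nt Nc l)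
     \<and> int (card {(i,j). (i,j)\<in>PP l \<and> i\<in>{i. i<Nt l \<and> yt l i} \<and> j\<in>{j. j<Nc l \<and> \<not> yc l j}}) = Bl l
     \<and> int (card {(i,j). (i,j)\<in>PP l \<and> i\<in>{i. i<Nt l \<and> \<not> yt l i} \<and> j\<in>{j. j<Nc l \<and> yc l j}}) = Cl l"
    by (rule bchoice[elim_format]) blast
  define a where "a = {(l,i,j). l < L \<and> (i,j) \<in> PP l}"
  have sl: "{(i,j). (l,i,j)\<in>a} = PP l" if "l < L" for l unfolding a_def using that by auto
  have sub: "a \<subseteq> {(l,i,j). l < L \<and> i < Nt l \<and> j < Nc l}"
  proof
    fix x assume "x \<in> a"
    then obtain l i j where x: "x = (l,i,j)" "l < L" "(i,j) \<in> PP l" unfolding a_def by auto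
    then have "(i,j) \<in> ({i. i<Nt l \<and> yt l i} \<union> {i. i<Nt l \<and> \<not> yt l i}) \<times> ({j. j<Nc l \<and> yc l j} \<union> {j. j<Nc l \<and> \<not> yc l j})"
      using PP by blast
    thus "x \<in> {(l,i,j). l < L \<and> i < Nt l \<and> j < Nc l}" using x by auto
  qed
  have feas: "feasible_matching L Nt Nc a"
    unfolding feasible_matching_def
  proof (intro conjI allI impI)
    show "a \<subseteq> {(l,i,j). l < L \<and> i < Nt l \<and> j < Nc l}" by (rule sub)
    show "j = j'" if "(l,i,j)\<in>a" "(l,i,j')\<in>a" for l i j j'
      using that PP unfolding a_def by blast
    show "i = i'" if "(l,i,j)\<in>a" "(l,i',j)\<in>a" for l i i' j
      using that PP unfolding a_def by blast
    show "card {(i,j). (l,i,j)\<in>a} = M Nt Nc l" if "l < L" for l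
      using PP that sl[OF that] by auto
  qed
  have cnt: "int (Bcount_l yt yc a l) = Bl l \<and> int (Ccount_l yt yc a l) = Cl l" if "l < L" for l
  proof -
    have "{(i,j). (l,i,j)\<in>a \<and> yt l i \<and> \<not> yc l j} = {(i,j). (i,j)\<in>PP l \<and> i\<in>{i. i<Nt l \<and> yt l i} \<and> j\<in>{j. j<Nc l \<and> \<not> yc l j}}"
      using sub that unfolding sl[OF that, symmetric] by auto
    moreover have "{(i,j). (l,i,j)\<in>a \<and> \<not> yt l i \<and> yc l j} = {(i,j). (i,j)\<in>PP l \<and> i\<in>{i. i<Nt l \<and> \<not> yt l i} \<and> j\<in>{j. j<Nc l \<and> yc l j}}"
      using sub that unfolding sl[OF that, symmetric] by auto
    ultimately show ?thesis using PP that unfolding Bcount_l_def Ccount_l_def by auto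
  qed
  have "chi yt yc a = (real_of_int (\<Sum>l<L. Bl l - Cl l) - 1) / sqrt (real_of_int (\<Sum>l<L. Bl l + Cl l) + 1)"
  proof -
    have "(\<Sum>l<L. int (Bcount_l yt yc a l) - int (Ccount_l yt yc a l)) = (\<Sum>l<L. Bl l - Cl l)"
      using cnt by (intro sum.cong) auto
    moreover have "(\<Sum>l<L. int (Bcount_l yt yc a l) + int (Ccount_l yt yc a l)) = (\<Sum>l<L. Bl l + Cl l)"
      using cnt by (intro sum.cong) auto
    ultimately show ?thesis unfolding chi_eq[OF sub] by simp
  qed
  then show ?thesis using part1 feas cnt by blast
qed
end
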